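(* Let $\mathcal{G}$ be a finite groupoid and let $\mathcal{H}$ and $\mathcal{K}$ be connected wide subgroupoids of $\mathcal{G}$. Then \[|\mathcal{H}\backslash\mathcal{G}/\mathcal{K}|=\langle \chi_{\mathrm{Ind}^\mathcal{G}_\mathcal{H}\mathrm{Tri}},\ \chi_{\mathrm{Ind}^\mathcal{G}_\mathcal{K}\mathrm{Tri}}\rangle.\]
   Context: A groupoid is a category in which every morphism is invertible; all groupoids are finite and nonempty; $\mathcal{C}_0,\mathcal{C}_1$ denote objects and morphisms, $\mathcal{C}_x:=\mathcal{C}(x,x)$ the isotropy group, and $gg'$ the composite $g\circ g'$. A subgroupoid is wide if it contains all objects, connected if any two of its objects are joined by one of its morphisms. For subgroupoids $\mathcal{H},\mathcal{K}$ and $g\in\mathcal{G}_1$, $\mathcal{H}g\mathcal{K}:=\{hgk\mid h\in\mathcal{H}_1,k\in\mathcal{K}_1,\mathrm{dom}\,h=\mathrm{cod}\,g,\mathrm{cod}\,k=\mathrm{dom}\,g\}$, and $\mathcal{H}\backslash\mathcal{G}/\mathcal{K}$ is the set of all such double cosets. A linear representation of a groupoid $\mathcal{C}$ is a functor $\mathcal{C}\to\mathbf{vect}$ (finite-dimensional complex vector spaces). $\mathrm{Tri}:\mathcal{H}\to\mathbf{vect}$ is the trivial representation ($x\mapsto\mathbb{C}$, every morphism $\mapsto\mathrm{id}_\mathbb{C}$). $\mathrm{Ind}^\mathcal{G}_\mathcal{H}:\mathbf{vect}^\mathcal{H}\to\mathbf{vect}^\mathcal{G}$ is the left adjoint of restriction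 along the inclusion $\mathcal{H}\hookrightarrow\mathcal{G}$ (left Kan extension along the inclusion). For a representation $R$ of $\mathcal{G}$ with representation space $V=\bigoplus_{x\in\mathcal{G}_0}R(x)$, and a morphism $g:x\to y$, let $\hat R(g):V\to V$ be the linear map that is $R(g):R(x)\to R(y)$ on the summand $R(x)$ and zero on the other summands; the character is $\chi_R:\mathcal{G}_1\to\mathbb{C}$, $\chi_R(g):=\mathrm{tr}(\hat R(g))$. The inner product of characters is $\langle\chi_R,\chi_{R'}\rangle:=\frac{1}{|\mathcal{G}_0|}\sum_{x\in\mathcal{G}_0}\langle\chi_R|_{\mathcal{G}_x},\chi_{R'}|_{\mathcal{G}_x}\rangle$, where for functions on the group $\mathcal{G}_x$, $\langle\alpha,\beta\rangle=\frac{1}{|\mathcal{G}_x|}\sum_{g\in\mathcal{G}_x}\alpha(g)\overline{\beta(g)}$. *)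

theory Defs
  imports Complex_Main "Jordan_Normal_Form.Matrix"
begin

text \<open>A groupoid given by its object set, morphism set, domain, codomain,
  composition (cmp g h = g o h, defined when gdom g = gcod h) and identities.\<close>

record ('o, 'm) gpd =
  obj :: "'o set"
  mor :: "'m set"
  gdom :: "'m \<Rightarrow> 'o"
  gcod :: "'m \<Rightarrow> 'o"
  cmp :: "'m \<Rightarrow> 'm \<Rightarrow> 'm"
  idn :: "'o \<Rightarrow> 'm"

definition groupoid :: "('o, 'm) gpd \<Rightarrow> bool" where
  "groupoid C \<longleftrightarrow>
     finite (obj C) \<and> finite (mor C) \<and> obj C \<noteq> {} \<and>
     (\<forall>g\<in>mor C. gdom C g \<in> obj C \<and> gcod C g \<in> obj C) \<and>
     (\<forall>x\<in>obj C. idn C x \<in> mor C \<and> gdom C (idn C x) = x \<and> gcod C (idn C x) = x) \<and>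
     (\<forall>g\<in>mor C. \<forall>h\<in>mor C. gdom C g = gcod C h \<longrightarrow>
        cmp C g h \<in> mor C \<and> gdom C (cmp C g h) = gdom C h \<and> gcod C (cmp C g h) = gcod C g) \<and>
     (\<forall>f\<in>mor C. \<forall>g\<in>mor C. \<forall>h\<in>mor C. gdom C f = gcod C g \<and> gdom C g = gcod C h \<longrightarrow>
        cmp C (cmp C f g) h = cmp C f (cmp C g h)) \<and>
     (\<forall>g\<in>mor C. cmp C (idn C (gcod C g)) g = g \<and> cmp C g (idn C (gdom C g)) = g) \<and>
     (\<forall>g\<in>mor C. \<exists>g'\<in>mor C. gdom C g' = gcod C g \<and> gcod C g' = gdom C g \<and>
        cmp C g' g = idn C (gdom C g) \<and> cmp C g g' = idn C (gcod C g))"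

definition subgroupoid :: "('o, 'm) gpd \<Rightarrow> ('o, 'm) gpd \<Rightarrow> bool" where
  "subgroupoid G H \<longleftrightarrow> groupoid H \<and> obj H \<subseteq> obj G \<and> mor H \<subseteq> mor G \<and>
     gdom H = gdom G \<and> gcod H = gcod G \<and> cmp H = cmp G \<and> idn H = idn G"

definition wide_subgroupoid :: "('o, 'm) gpd \<Rightarrow> ('o, 'm) gpd \<Rightarrow> bool" where
  "wide_subgroupoid G H \<longleftrightarrow> subgroupoid G H \<and> obj H = obj G"

definition connected_gpd :: "('o, 'm) gpd \<Rightarrow> bool" where
  "connected_gpd C \<longleftrightarrow> (\<forall>x\<in>obj C. \<forall>y\<in>obj C. \<exists>g\<in>mor C. gdom C g = x \<and> gcod C g = y)"

definition isotropy :: "('o, 'm) gpd \<Rightarrow> 'o \<Rightarrow> 'm set" where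
  "isotropy C x = {g \<in> mor C. gdom C g = x \<and> gcod C g = x}"

definition double_coset :: "('o, 'm) gpd \<Rightarrow> ('o, 'm) gpd \<Rightarrow> 'm \<Rightarrow> ('o, 'm) gpd \<Rightarrow> 'm set" where
  "double_coset G H g K = {cmp G (cmp G h g) k | h k. h \<in> mor H \<and> k \<in> mor K \<and>
       gdom G h = gcod G g \<and> gcod G k = gdom G g}"

definition double_cosets :: "('o, 'm) gpd \<Rightarrow> ('o, 'm) gpd \<Rightarrow> ('o, 'm) gpd \<Rightarrow> 'm set set" where
  "double_cosets G H K = {double_coset G H g K | g. g \<in> mor G}"

text \<open>A representation of C in vect, up to choosing bases: each object x goes to
  the space complex^(d x), each morphism g to a (d (gcod g)) x (d (gdom g)) matrix.\<close>

definition is_rep :: "('o, 'm) gpd \<Rightarrow> ('o \<Rightarrow> nat) \<Rightarrow> ('m \<Rightarrow> complex mat) \<Rightarrow> bool" where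
  "is_rep C d R \<longleftrightarrow>
     (\<forall>g\<in>mor C. R g \<in> carrier_mat (d (gcod C g)) (d (gdom C g))) \<and>
     (\<forall>x\<in>obj C. R (idn C x) = 1\<^sub>m (d x)) \<and>
     (\<forall>g\<in>mor C. \<forall>h\<in>mor C. gdom C g = gcod C h \<longrightarrow> R (cmp C g h) = R g * R h)"

definition nat_trans :: "('o, 'm) gpd \<Rightarrow> ('o \<Rightarrow> nat) \<Rightarrow> ('m \<Rightarrow> complex mat)
    \<Rightarrow> ('o \<Rightarrow> nat) \<Rightarrow> ('m \<Rightarrow> complex mat) \<Rightarrow> ('o \<Rightarrow> complex mat) \<Rightarrow> bool" where
  "nat_trans C d R e S \<eta> \<longleftrightarrow>
     (\<forall>x\<in>obj C. \<eta> x \<in> carrier_mat (e x) (d x)) \<and>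
     (\<forall>g\<in>mor C. S g * \<eta> (gdom C g) = \<eta> (gcod C g) * R g)"

definition triv_dim :: "'o \<Rightarrow> nat" where "triv_dim x = 1"
definition triv_rep :: "'m \<Rightarrow> complex mat" where "triv_rep g = 1\<^sub>m 1"

text \<open>(dI, I) together with the unit eta is Ind^G_H (d, R): the value of the left
  adjoint of restriction, characterised by its universal property (universal arrow
  from (d,R) to the restriction functor).\<close>

definition is_induction :: "('o, 'm) gpd \<Rightarrow> ('o, 'm) gpd \<Rightarrow> ('o \<Rightarrow> nat) \<Rightarrow> ('m \<Rightarrow> complex mat)
    \<Rightarrow> ('o \<Rightarrow> nat) \<Rightarrow> ('m \<Rightarrow> complex mat) \<Rightarrow> ('o \<Rightarrow> complex mat) \<Rightarrow> bool" where
  "is_induction G H d R dI I \<eta> \<longleftrightarrow>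
     is_rep H d R \<and> is_rep G dI I \<and> nat_trans H d R dI I \<eta> \<and>
     (\<forall>(e :: 'o \<Rightarrow> nat) (S :: 'm \<Rightarrow> complex mat) f.
        is_rep G e S \<and> nat_trans H d R e S f \<longrightarrow>
          (\<exists>\<phi>. nat_trans G dI I e S \<phi> \<and> (\<forall>x\<in>obj H. \<phi> x * \<eta> x = f x)) \<and>
          (\<forall>\<phi> \<psi>. nat_trans G dI I e S \<phi> \<and> (\<forall>x\<in>obj H. \<phi> x * \<eta> x = f x) \<and>
                   nat_trans G dI I e S \<psi> \<and> (\<forall>x\<in>obj H. \<psi> x * \<eta> x = f x)
                   \<longrightarrow> (\<forall>x\<in>obj G. \<phi> x = \<psi> x)))"

text \<open>The representation space V is the direct sum of the complex^(d x), with
  standard basis indexed by pairs (x, i), i < d x.\<close>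

definition rep_basis :: "('o, 'm) gpd \<Rightarrow> ('o \<Rightarrow> nat) \<Rightarrow> ('o \<times> nat) set" where
  "rep_basis C d = {(x, i). x \<in> obj C \<and> i < d x}"

text \<open>Matrix entry ((y,j),(x,i)) of the map hat R g : V -> V.\<close>

definition rep_hat :: "('o, 'm) gpd \<Rightarrow> ('m \<Rightarrow> complex mat) \<Rightarrow> 'm
    \<Rightarrow> ('o \<times> nat) \<Rightarrow> ('o \<times> nat) \<Rightarrow> complex" where
  "rep_hat C R g = (\<lambda>(y, j) (x, i).
     if x = gdom C g \<and> y = gcod C g then R g $$ (j, i) else 0)"

definition character :: "('o, 'm) gpd \<Rightarrow> ('o \<Rightarrow> nat) \<Rightarrow> ('m \<Rightarrow> complex mat) \<Rightarrow> 'm \<Rightarrow> complex" where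
  "character C d R g = (\<Sum>b\<in>rep_basis C d. rep_hat C R g b b)"

definition char_inner :: "('o, 'm) gpd \<Rightarrow> ('m \<Rightarrow> complex) \<Rightarrow> ('m \<Rightarrow> complex) \<Rightarrow> complex" where
  "char_inner C \<alpha> \<beta> = (1 / of_nat (card (obj C))) *
     (\<Sum>x\<in>obj C. (1 / of_nat (card (isotropy C x))) *
        (\<Sum>g\<in>isotropy C x. \<alpha> g * cnj (\<beta> g)))"

end

theory Submission
  imports Defs
begin

definition ginv :: "('o, 'm) gpd \<Rightarrow> 'm \<Rightarrow> 'm" where
  "ginv C g = (SOME g'. g' \<in> mor C \<and> gdom C g' = gcod C g \<and> gcod C g' = gdom C g \<and>
        cmp C g' g = idn C (gdom C g) \<and> cmp C g g' = idn C (gcod C g))"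

locale gpdl =
  fixes G :: "('o, 'm) gpd"
  assumes gp: "groupoid G"
begin

lemma fin_obj: "finite (obj G)" and fin_mor: "finite (mor G)" and obj_ne: "obj G \<noteq> {}"
  using gp unfolding groupoid_def by auto

lemma dom_obj[simp]: "g \<in> mor G \<Longrightarrow> gdom G g \<in> obj G"
  and cod_obj[simp]: "g \<in> mor G \<Longrightarrow> gcod G g \<in> obj G"
  using gp unfolding groupoid_def by auto

lemma idn_mor[simp]: "x \<in> obj G \<Longrightarrow> idn G x \<in> mor G"
  and idn_dom[simp]: "x \<in> obj G \<Longrightarrow> gdom G (idn G x) = x"
  and idn_cod[simp]: "x \<in> obj G \<Longrightarrow> gcod G (idn G x) = x"
  using gp unfolding groupoid_def by auto

lemma cmp_mor[simp]: "g \<in> mor G \<Longrightarrow> h \<in> mor G \<Longrightarrow> gdom G g = gcod G h \<Longrightarrow> cmp G g h \<in> mor G"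
  and cmp_dom[simp]: "g \<in> mor G \<Longrightarrow> h \<in> mor G \<Longrightarrow> gdom G g = gcod G h \<Longrightarrow> gdom G (cmp G g h) = gdom G h"
  and cmp_cod[simp]: "g \<in> mor G \<Longrightarrow> h \<in> mor G \<Longrightarrow> gdom G g = gcod G h \<Longrightarrow> gcod G (cmp G g h) = gcod G g"
  using gp unfolding groupoid_def by auto

lemma assoc: "f \<in> mor G \<Longrightarrow> g \<in> mor G \<Longrightarrow> h \<in> mor G \<Longrightarrow> gdom G f = gcod G g \<Longrightarrow> gdom G g = gcod G h
   \<Longrightarrow> cmp G (cmp G f g) h = cmp G f (cmp G g h)"
  using gp unfolding groupoid_def by blast

lemma idl[simp]: "g \<in> mor G \<Longrightarrow> cmp G (idn G (gcod G g)) g = g"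
  and idr[simp]: "g \<in> mor G \<Longrightarrow> cmp G g (idn G (gdom G g)) = g"
  using gp unfolding groupoid_def by auto

lemma inv_ex: "g \<in> mor G \<Longrightarrow> \<exists>g'. g' \<in> mor G \<and> gdom G g' = gcod G g \<and> gcod G g' = gdom G g \<and>
        cmp G g' g = idn G (gdom G g) \<and> cmp G g g' = idn G (gcod G g)"
  using gp unfolding groupoid_def by blast

lemma ginv: assumes "g \<in> mor G"
  shows "ginv G g \<in> mor G \<and> gdom G (ginv G g) = gcod G g \<and> gcod G (ginv G g) = gdom G g \<and>
        cmp G (ginv G g) g = idn G (gdom G g) \<and> cmp G g (ginv G g) = idn G (gcod G g)"
  unfolding ginv_def by (rule someI_ex, rule inv_ex[OF assms])

lemma ginv_mor[simp]: "g \<in> mor G \<Longrightarrow> ginv G g \<in> mor G"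
  and ginv_dom[simp]: "g \<in> mor G \<Longrightarrow> gdom G (ginv G g) = gcod G g"
  and ginv_cod[simp]: "g \<in> mor G \<Longrightarrow> gcod G (ginv G g) = gdom G g"
  and ginv_l[simp]: "g \<in> mor G \<Longrightarrow> cmp G (ginv G g) g = idn G (gdom G g)"
  and ginv_r[simp]: "g \<in> mor G \<Longrightarrow> cmp G g (ginv G g) = idn G (gcod G g)"
  using ginv by auto

lemma left_inv_cmp: assumes "a \<in> mor G" "m \<in> mor G" "gdom G a = gcod G m"
  shows "cmp G (ginv G a) (cmp G a m) = m"
proof -
  have A: "cmp G (cmp G (ginv G a) a) m = cmp G (ginv G a) (cmp G a m)"
    by (rule assoc) (simp_all add: assms)
  have B: "cmp G (cmp G (ginv G a) a) m = m" using assms by simp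
  show ?thesis using A B by simp
qed

lemma right_inv_cmp: assumes "a \<in> mor G" "m \<in> mor G" "gcod G a = gdom G m"
  shows "cmp G (cmp G m a) (ginv G a) = m"
proof -
  have A: "cmp G (cmp G m a) (ginv G a) = cmp G m (cmp G a (ginv G a))"
    by (rule assoc) (simp_all add: assms)
  have B: "cmp G m (cmp G a (ginv G a)) = m" using assms by simp
  show ?thesis using A B by simp
qed

lemma cancel_l: assumes "a \<in> mor G" "m \<in> mor G" "m' \<in> mor G" "gdom G a = gcod G m" "gdom G a = gcod G m'"
  "cmp G a m = cmp G a m'" shows "m = m'"
proof -
  have "m = cmp G (ginv G a) (cmp G a m)" using left_inv_cmp[of a m] assms by simp
  also have "\<dots> = cmp G (ginv G a) (cmp G a m')" using assms(6) by simp
  also have "\<dots> = m'" using left_inv_cmp[of a m'] assms(1,3,5) by simp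
  finally show ?thesis .
qed

lemma cancel_r: assumes "a \<in> mor G" "m \<in> mor G" "m' \<in> mor G" "gcod G a = gdom G m" "gcod G a = gdom G m'"
  "cmp G m a = cmp G m' a" shows "m = m'"
proof -
  have "m = cmp G (cmp G m a) (ginv G a)" using right_inv_cmp[of a m] assms by simp
  also have "\<dots> = cmp G (cmp G m' a) (ginv G a)" using assms(6) by simp
  also have "\<dots> = m'" using right_inv_cmp[of a m'] assms(1,3,5) by simp
  finally show ?thesis .
qed

lemma ginv_unique: assumes "g \<in> mor G" "g' \<in> mor G" "gdom G g' = gcod G g" "cmp G g' g = idn G (gdom G g)"
  shows "g' = ginv G g"
proof (rule cancel_r[of g])
  show "g \<in> mor G" "g' \<in> mor G" "ginv G g \<in> mor G" using assms by auto
  show "gcod G g = gdom G g'" using assms(3) by simp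
  show "gcod G g = gdom G (ginv G g)" using assms(1) by simp
  show "cmp G g' g = cmp G (ginv G g) g" using assms(4) ginv_l[OF assms(1)] by simp
qed

end


definition cls :: "('o, 'm) gpd \<Rightarrow> ('o, 'm) gpd \<Rightarrow> 'm \<Rightarrow> 'm set" where
  "cls G H a = {cmp G a h | h. h \<in> mor H \<and> gcod G h = gdom G a}"

definition Xs :: "('o, 'm) gpd \<Rightarrow> ('o, 'm) gpd \<Rightarrow> 'o \<Rightarrow> 'm set set" where
  "Xs G H y = cls G H ` {a \<in> mor G. gcod G a = y}"

definition rep :: "('o, 'm) gpd \<Rightarrow> ('o, 'm) gpd \<Rightarrow> 'm set \<Rightarrow> 'm" where
  "rep G H C = (SOME a. a \<in> mor G \<and> C = cls G H a)"

definition act :: "('o, 'm) gpd \<Rightarrow> 'm \<Rightarrow> 'm set \<Rightarrow> 'm set" where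
  "act G g C = cmp G g ` C"

locale wsub = gpdl G for G :: "('o, 'm) gpd" +
  fixes H :: "('o, 'm) gpd"
  assumes wsub: "wide_subgroupoid G H" and conn: "connected_gpd H"
begin

lemma Hmor[simp]: "h \<in> mor H \<Longrightarrow> h \<in> mor G"
  using wsub unfolding wide_subgroupoid_def subgroupoid_def by auto

lemma Hobj: "obj H = obj G"
  using wsub unfolding wide_subgroupoid_def by auto

lemma Hgpd: "groupoid H" and Hops: "gdom H = gdom G" "gcod H = gcod G" "cmp H = cmp G" "idn H = idn G"
  using wsub unfolding wide_subgroupoid_def subgroupoid_def by auto

interpretation Hg: gpdl H by (rule gpdl.intro[OF Hgpd])

lemma H_idn[simp]: "x \<in> obj G \<Longrightarrow> idn G x \<in> mor H"
  using Hg.idn_mor[of x] unfolding Hobj Hops by simp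

lemma H_cmp[simp]: "h \<in> mor H \<Longrightarrow> h' \<in> mor H \<Longrightarrow> gdom G h = gcod G h' \<Longrightarrow> cmp G h h' \<in> mor H"
  using Hg.cmp_mor[of h h'] unfolding Hops by simp

lemma H_inv[simp]: assumes "h \<in> mor H" shows "ginv G h \<in> mor H"
proof -
  obtain g' where g': "g' \<in> mor H" "gdom H g' = gcod H h" "cmp H g' h = idn H (gdom H h)"
    using Hg.inv_ex[OF assms] by blast
  have "g' = ginv G h" using g' Hops assms by (intro ginv_unique) auto
  thus ?thesis using g'(1) by (rule subst)
qed

lemma H_conn: "x \<in> obj G \<Longrightarrow> y \<in> obj G \<Longrightarrow> \<exists>h\<in>mor H. gdom G h = x \<and> gcod G h = y"
proof -
  assume "x \<in> obj G" "y \<in> obj G"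
  then have "x \<in> obj H" "y \<in> obj H" unfolding Hobj .
  then obtain h where "h \<in> mor H" "gdom H h = x" "gcod H h = y"
    using conn unfolding connected_gpd_def by blast
  then show ?thesis unfolding Hops by blast
qed

lemma cls_elem: assumes "a \<in> mor G" "b \<in> cls G H a"
  shows "b \<in> mor G" "gcod G b = gcod G a" "\<exists>h\<in>mor H. gcod G h = gdom G a \<and> b = cmp G a h"
  using assms unfolding cls_def by auto

lemma cls_mem: "a \<in> mor G \<Longrightarrow> h \<in> mor H \<Longrightarrow> gcod G h = gdom G a \<Longrightarrow> cmp G a h \<in> cls G H a"
  unfolding cls_def by blast

lemma self_cls: "a \<in> mor G \<Longrightarrow> a \<in> cls G H a"
  using cls_mem[of a "idn G (gdom G a)"] by simp

lemma cls_eq: assumes a: "a \<in> mor G" and b: "b \<in> cls G H a" shows "cls G H b = cls G H a"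
proof -
  obtain h where h: "h \<in> mor H" "gcod G h = gdom G a" "b = cmp G a h" using cls_elem[OF a b] by blast
  have hG: "h \<in> mor G" using h by simp
  show ?thesis
  proof
    show "cls G H b \<subseteq> cls G H a"
    proof
      fix z assume "z \<in> cls G H b"
      then obtain h' where h': "h' \<in> mor H" "gcod G h' = gdom G b" "z = cmp G b h'" unfolding cls_def by blast
      have "z = cmp G a (cmp G h h')" using h h' a hG by (simp add: assoc)
      moreover have "cmp G h h' \<in> mor H" using h h' a hG by simp
      moreover have "gcod G (cmp G h h') = gdom G a" using h h' a hG by simp
      ultimately show "z \<in> cls G H a" using cls_mem[OF a, of "cmp G h h'"] by simp
    qed
  next
    show "cls G H a \<subseteq> cls G H b"
    proof
      fix z assume "z \<in> cls G H a"
      then obtain h' where h': "h' \<in> mor H" "gcod G h' = gdom G a" "z = cmp G a h'" unfolding cls_def by blast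
      have h'G: "h' \<in> mor G" using h' by simp
      have hh: "cmp G h (cmp G (ginv G h) h') = h'"
        using assoc[of h "ginv G h" h'] h h' hG h'G idl[of h'] by simp
      have "cmp G b (cmp G (ginv G h) h') = cmp G a (cmp G h (cmp G (ginv G h) h'))"
        using h h' a hG h'G by (simp add: assoc)
      also have "\<dots> = z" using hh h' by simp
      finally have "z = cmp G b (cmp G (ginv G h) h')" by simp
      moreover have "cmp G (ginv G h) h' \<in> mor H" using h h' a hG h'G by simp
      moreover have "gcod G (cmp G (ginv G h) h') = gdom G b" using h h' a hG h'G by simp
      moreover have "b \<in> mor G" using h a hG by simp
      ultimately show "z \<in> cls G H b" using cls_mem[of b "cmp G (ginv G h) h'"] by simp
    qed
  qed
qed

lemma cls_eq_iff: "a \<in> mor G \<Longrightarrow> b \<in> mor G \<Longrightarrow> cls G H a = cls G H b \<longleftrightarrow> b \<in> cls G H a"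
  using cls_eq[of a b] self_cls[of b] by auto

lemma act_cls: "g \<in> mor G \<Longrightarrow> a \<in> mor G \<Longrightarrow> gdom G g = gcod G a \<Longrightarrow> act G g (cls G H a) = cls G H (cmp G g a)"
proof -
  assume assms: "g \<in> mor G" "a \<in> mor G" "gdom G g = gcod G a"
  have pw: "\<And>h. h \<in> mor H \<Longrightarrow> gcod G h = gdom G a \<Longrightarrow> cmp G g (cmp G a h) = cmp G (cmp G g a) h"
    using assms by (simp add: assoc)
  have dm: "gdom G (cmp G g a) = gdom G a" using assms by simp
  show ?thesis unfolding act_def cls_def dm using pw by force
qed

lemma X_fin: "finite (Xs G H y)"
  unfolding Xs_def using fin_mor by simp

lemma Xs_elem: "C \<in> Xs G H y \<Longrightarrow> \<exists>a. a \<in> mor G \<and> gcod G a = y \<and> C = cls G H a"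
  unfolding Xs_def by auto

lemma Xs_I: "a \<in> mor G \<Longrightarrow> cls G H a \<in> Xs G H (gcod G a)"
  unfolding Xs_def by auto

lemma rep: assumes "C \<in> Xs G H y"
  shows "rep G H C \<in> mor G" "cls G H (rep G H C) = C" "gcod G (rep G H C) = y"
proof -
  obtain a where a: "a \<in> mor G" "gcod G a = y" "C = cls G H a" using Xs_elem[OF assms] by blast
  have "rep G H C \<in> mor G \<and> C = cls G H (rep G H C)" unfolding rep_def
    by (rule someI[of _ a]) (use a in auto)
  then have r: "rep G H C \<in> mor G" "C = cls G H (rep G H C)" by auto
  then show "rep G H C \<in> mor G" "cls G H (rep G H C) = C" by auto
  have "rep G H C \<in> cls G H a" using self_cls[OF r(1)] r(2) a(3) by simp
  then show "gcod G (rep G H C) = y" using cls_elem(2)[OF a(1)] a(2) by simp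
qed

lemma act_X: assumes "g \<in> mor G" "C \<in> Xs G H (gdom G g)" shows "act G g C \<in> Xs G H (gcod G g)"
proof -
  obtain a where a: "a \<in> mor G" "gcod G a = gdom G g" "C = cls G H a" using Xs_elem[OF assms(2)] by blast
  have "act G g C = cls G H (cmp G g a)" using a assms act_cls by simp
  moreover have "cls G H (cmp G g a) \<in> Xs G H (gcod G (cmp G g a))" using a assms by (intro Xs_I) simp
  ultimately show ?thesis using a assms by simp
qed

lemma act_id: assumes "C \<in> Xs G H x" shows "act G (idn G x) C = C"
proof -
  obtain a where a: "a \<in> mor G" "gcod G a = x" "C = cls G H a" using Xs_elem[OF assms] by blast
  have x: "x \<in> obj G" using a(1) a(2) cod_obj by blast
  have 1: "act G (idn G x) (cls G H a) = cls G H (cmp G (idn G x) a)" by (rule act_cls) (use a x in auto)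
  have 2: "cmp G (idn G x) a = a" using idl[OF a(1)] a(2) by simp
  show ?thesis using 1 2 a(3) by simp
qed

lemma act_cmp: assumes "g \<in> mor G" "h \<in> mor G" "gdom G g = gcod G h" "C \<in> Xs G H (gdom G h)"
  shows "act G (cmp G g h) C = act G g (act G h C)"
proof -
  obtain a where a: "a \<in> mor G" "gcod G a = gdom G h" "C = cls G H a" using Xs_elem[OF assms(4)] by blast
  show ?thesis using a assms by (simp add: act_cls assoc)
qed

lemma act_inj: assumes "g \<in> mor G" "C \<in> Xs G H (gdom G g)" "D \<in> Xs G H (gdom G g)"
  "act G g C = act G g D" shows "C = D"
proof -
  have inv: "act G (ginv G g) (act G g E) = E" if "E \<in> Xs G H (gdom G g)" for E
    using assms act_cmp[of "ginv G g" g E] act_id[OF that] that by simp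
  have "C = act G (ginv G g) (act G g C)" using inv[OF assms(2)] by simp
  also have "\<dots> = act G (ginv G g) (act G g D)" using assms(4) by simp
  also have "\<dots> = D" using inv[OF assms(3)] by simp
  finally show ?thesis .
qed

end

definition dM :: "('o, 'm) gpd \<Rightarrow> ('o, 'm) gpd \<Rightarrow> 'o \<Rightarrow> nat" where
  "dM G H y = card (Xs G H y)"

definition en :: "('o, 'm) gpd \<Rightarrow> ('o, 'm) gpd \<Rightarrow> 'o \<Rightarrow> nat \<Rightarrow> 'm set" where
  "en G H y = (SOME f. bij_betw f {0..<dM G H y} (Xs G H y))"

definition Mm :: "('o, 'm) gpd \<Rightarrow> ('o, 'm) gpd \<Rightarrow> 'm \<Rightarrow> complex mat" where
  "Mm G H g = mat (dM G H (gcod G g)) (dM G H (gdom G g))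
     (\<lambda>(i,j). if act G g (en G H (gdom G g) j) = en G H (gcod G g) i then 1 else 0)"

definition fu :: "('o, 'm) gpd \<Rightarrow> ('o, 'm) gpd \<Rightarrow> 'o \<Rightarrow> complex mat" where
  "fu G H x = mat (dM G H x) 1 (\<lambda>(i,j). if en G H x i = cls G H (idn G x) then 1 else 0)"

lemma mult_entry: assumes "A \<in> carrier_mat n m" "B \<in> carrier_mat m p" "i < n" "j < p"
  shows "(A * B) $$ (i,j) = (\<Sum>k=0..<m. A $$ (i,k) * B $$ (k,j))"
  using assms by (simp add: scalar_prod_def)

lemma sum_delta_nat: fixes k0 n :: nat assumes "k0 < n" "\<And>k. k < n \<Longrightarrow> P k \<longleftrightarrow> k = k0"
  shows "(\<Sum>k=0..<n. if P k then f k else (0::'a::comm_monoid_add)) = f k0"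
proof -
  have "(\<Sum>k=0..<n. if P k then f k else 0) = (\<Sum>k=0..<n. if k = k0 then f k else 0)"
    using assms(2) by (intro sum.cong) auto
  also have "\<dots> = f k0" using assms(1) sum.delta[OF finite_atLeastLessThan[of 0 n], of k0 f] by simp
  finally show ?thesis .
qed

context wsub
begin

lemma en_bij: "bij_betw (en G H y) {0..<dM G H y} (Xs G H y)"
proof -
  have "\<exists>f. bij_betw f {0..<dM G H y} (Xs G H y)"
    unfolding dM_def by (rule ex_bij_betw_nat_finite[OF X_fin])
  then show ?thesis unfolding en_def by (rule someI_ex)
qed

lemma en_in: assumes "i < dM G H y" shows "en G H y i \<in> Xs G H y"
proof -
  have "en G H y i \<in> en G H y ` {0..<dM G H y}" using assms by simp
  then show ?thesis using en_bij[of y] unfolding bij_betw_def by simp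
qed

lemma en_inj: "i < dM G H y \<Longrightarrow> j < dM G H y \<Longrightarrow> en G H y i = en G H y j \<Longrightarrow> i = j"
  using en_bij unfolding bij_betw_def inj_on_def by auto

lemma en_surj: "C \<in> Xs G H y \<Longrightarrow> \<exists>i<dM G H y. en G H y i = C"
  using en_bij unfolding bij_betw_def by (metis atLeastLessThan_iff imageE)

lemma Mm_carrier: "Mm G H g \<in> carrier_mat (dM G H (gcod G g)) (dM G H (gdom G g))"
  unfolding Mm_def by simp

lemma Mm_dims[simp]: "dim_row (Mm G H g) = dM G H (gcod G g)" "dim_col (Mm G H g) = dM G H (gdom G g)"
  unfolding Mm_def by simp_all

lemma fu_dims[simp]: "dim_row (fu G H x) = dM G H x" "dim_col (fu G H x) = 1"
  unfolding fu_def by simp_all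

lemma Mm_entry: "i < dM G H (gcod G g) \<Longrightarrow> j < dM G H (gdom G g) \<Longrightarrow>
   Mm G H g $$ (i,j) = (if act G g (en G H (gdom G g) j) = en G H (gcod G g) i then 1 else 0)"
  unfolding Mm_def by simp

lemma fu_carrier: "fu G H x \<in> carrier_mat (dM G H x) 1"
  unfolding fu_def by simp

lemma fu_entry: "i < dM G H x \<Longrightarrow> fu G H x $$ (i,0) = (if en G H x i = cls G H (idn G x) then 1 else 0)"
  unfolding fu_def by simp

lemma Mm_id: assumes "x \<in> obj G" shows "Mm G H (idn G x) = 1\<^sub>m (dM G H x)"
proof (rule eq_matI)
  fix i j assume ij: "i < dim_row (1\<^sub>m (dM G H x))" "j < dim_col (1\<^sub>m (dM G H x))"
  then have i: "i < dM G H x" and j: "j < dM G H x" by auto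
  have "act G (idn G x) (en G H x j) = en G H x j" using act_id en_in[OF j] by simp
  then have "Mm G H (idn G x) $$ (i,j) = (if en G H x j = en G H x i then 1 else 0)"
    using Mm_entry[of i "idn G x" j] i j assms by simp
  also have "\<dots> = 1\<^sub>m (dM G H x) $$ (i,j)" using i j en_inj[OF i j] by auto
  finally show "Mm G H (idn G x) $$ (i,j) = 1\<^sub>m (dM G H x) $$ (i,j)" .
qed (use assms in \<open>simp_all add: Mm_def\<close>)

lemma Mm_cmp: assumes g: "g \<in> mor G" and h: "h \<in> mor G" and gh: "gdom G g = gcod G h"
  shows "Mm G H (cmp G g h) = Mm G H g * Mm G H h"
proof (rule eq_matI)
  let ?y = "gcod G g" and ?z = "gdom G g" and ?x = "gdom G h"
  have dc: "gdom G (cmp G g h) = ?x" "gcod G (cmp G g h) = ?y" using assms by auto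
  fix i j assume "i < dim_row (Mm G H g * Mm G H h)" "j < dim_col (Mm G H g * Mm G H h)"
  then have i: "i < dM G H ?y" and j: "j < dM G H ?x" using Mm_carrier by auto
  have ej: "en G H ?x j \<in> Xs G H ?x" using en_in[OF j] .
  have hx: "act G h (en G H ?x j) \<in> Xs G H ?z" using act_X[OF h] ej gh by simp
  have Mh: "Mm G H h \<in> carrier_mat (dM G H ?z) (dM G H ?x)" using Mm_carrier[of h] gh by simp
  obtain k0 where k0: "k0 < dM G H ?z" "en G H ?z k0 = act G h (en G H ?x j)" using en_surj[OF hx] by blast
  have "(Mm G H g * Mm G H h) $$ (i,j) = (\<Sum>k=0..<dM G H ?z. Mm G H g $$ (i,k) * Mm G H h $$ (k,j))"
    using mult_entry[OF Mm_carrier[of g] Mh] i j by simp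
  also have "\<dots> = (\<Sum>k=0..<dM G H ?z. if act G h (en G H ?x j) = en G H ?z k then
       (if act G g (en G H ?z k) = en G H ?y i then 1 else 0) else 0)"
    using i j gh by (intro sum.cong) (auto simp: Mm_entry)
  also have "\<dots> = (if act G g (en G H ?z k0) = en G H ?y i then 1 else 0)"
    by (rule sum_delta_nat[OF k0(1)]) (use k0 en_inj in metis)
  also have "\<dots> = (if act G (cmp G g h) (en G H ?x j) = en G H ?y i then 1 else 0)"
    using k0(2) act_cmp[OF g h gh] ej gh by simp
  also have "\<dots> = Mm G H (cmp G g h) $$ (i,j)" using Mm_entry[of i "cmp G g h" j] dc i j by simp
  finally show "Mm G H (cmp G g h) $$ (i,j) = (Mm G H g * Mm G H h) $$ (i,j)" by simp
qed (use assms Mm_carrier in \<open>simp_all add: Mm_def\<close>)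

lemma Mm_rep: "is_rep G (dM G H) (Mm G H)"
  unfolding is_rep_def using Mm_carrier Mm_id Mm_cmp by blast

lemma Mm_fu: assumes a: "a \<in> mor G" and i: "i < dM G H (gcod G a)"
  shows "(Mm G H a * fu G H (gdom G a)) $$ (i,0) = (if cls G H a = en G H (gcod G a) i then 1 else 0)"
proof -
  let ?x = "gdom G a" and ?y = "gcod G a"
  have x: "?x \<in> obj G" using a by simp
  have cx: "cls G H (idn G ?x) \<in> Xs G H ?x" using Xs_I[of "idn G ?x"] x by simp
  obtain k0 where k0: "k0 < dM G H ?x" "en G H ?x k0 = cls G H (idn G ?x)" using en_surj[OF cx] by blast
  have "(Mm G H a * fu G H ?x) $$ (i,0) = (\<Sum>k=0..<dM G H ?x. Mm G H a $$ (i,k) * fu G H ?x $$ (k,0))"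
    using mult_entry[OF Mm_carrier[of a] fu_carrier[of ?x]] i by simp
  also have "\<dots> = (\<Sum>k=0..<dM G H ?x. if en G H ?x k = cls G H (idn G ?x) then
       (if act G a (en G H ?x k) = en G H ?y i then 1 else 0) else 0)"
    using i by (intro sum.cong) (auto simp: Mm_entry fu_entry)
  also have "\<dots> = (if act G a (en G H ?x k0) = en G H ?y i then 1 else 0)"
    by (rule sum_delta_nat[OF k0(1)]) (use k0 en_inj in metis)
  also have "act G a (en G H ?x k0) = cls G H a"
    using k0(2) act_cls[of a "idn G ?x"] a x idr[OF a] by simp
  finally show ?thesis by simp
qed

lemma fu_nat: "nat_trans H triv_dim triv_rep (dM G H) (Mm G H) (fu G H)"
  unfolding nat_trans_def
proof (intro conjI ballI)
  fix x assume "x \<in> obj H"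
  show "fu G H x \<in> carrier_mat (dM G H x) (triv_dim x)" using fu_carrier by (simp add: triv_dim_def)
next
  fix h assume hH: "h \<in> mor H"
  have h: "h \<in> mor G" using hH by simp
  let ?x = "gdom G h" and ?y = "gcod G h"
  have y: "?y \<in> obj G" using h by simp
  have "fu G H ?y * triv_rep h = fu G H ?y" using fu_carrier[of ?y] by (simp add: triv_rep_def)
  moreover have "Mm G H h * fu G H ?x = fu G H ?y"
  proof (rule eq_matI)
    fix i j assume "i < dim_row (fu G H ?y)" "j < dim_col (fu G H ?y)"
    then have i: "i < dM G H ?y" and j0: "j = 0" using fu_carrier[of ?y] by auto
    have "h \<in> cls G H (idn G ?y)" using cls_mem[of "idn G ?y" h] hH y idl[OF h] by simp
    then have "cls G H h = cls G H (idn G ?y)" using cls_eq[of "idn G ?y" h] y by simp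
    then show "(Mm G H h * fu G H ?x) $$ (i,j) = fu G H ?y $$ (i,j)"
      using Mm_fu[OF h i] fu_entry[OF i] j0 by auto
  qed (use Mm_carrier fu_carrier in auto)
  ultimately show "Mm G H h * fu G H (gdom H h) = fu G H (gcod H h) * triv_rep h"
    using Hops by simp
qed

end

definition mtr :: "complex mat \<Rightarrow> complex" where
  "mtr A = (\<Sum>i=0..<dim_row A. A $$ (i,i))"

lemma mtr_comm: assumes A: "A \<in> carrier_mat n m" and B: "B \<in> carrier_mat m n"
  shows "mtr (A * B) = mtr (B * A)"
proof -
  have e1: "\<And>i. i \<in> {0..<n} \<Longrightarrow> (A * B) $$ (i,i) = (\<Sum>k=0..<m. A $$ (i,k) * B $$ (k,i))"
    using mult_entry[OF A B] by simp
  have e2: "\<And>k. k \<in> {0..<m} \<Longrightarrow> (B * A) $$ (k,k) = (\<Sum>i=0..<n. B $$ (k,i) * A $$ (i,k))"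
    using mult_entry[OF B A] by simp
  have d1: "dim_row (A * B) = n" and d2: "dim_row (B * A) = m" using A B by auto
  have "mtr (A * B) = (\<Sum>i=0..<n. \<Sum>k=0..<m. A $$ (i,k) * B $$ (k,i))"
    unfolding mtr_def d1 using e1 by (rule sum.cong[OF refl])
  also have "\<dots> = (\<Sum>k=0..<m. \<Sum>i=0..<n. B $$ (k,i) * A $$ (i,k))"
    by (subst sum.swap) (intro sum.cong refl, simp add: mult.commute)
  also have "\<dots> = mtr (B * A)"
    unfolding mtr_def d2 using e2 by (rule sum.cong[OF refl, symmetric])
  finally show ?thesis .
qed

context gpdl
begin

lemma rep_carrier: "is_rep G d R \<Longrightarrow> g \<in> mor G \<Longrightarrow> R g \<in> carrier_mat (d (gcod G g)) (d (gdom G g))"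
  unfolding is_rep_def by blast

lemma rep_id: "is_rep G d R \<Longrightarrow> x \<in> obj G \<Longrightarrow> R (idn G x) = 1\<^sub>m (d x)"
  unfolding is_rep_def by blast

lemma rep_cmp: "is_rep G d R \<Longrightarrow> g \<in> mor G \<Longrightarrow> h \<in> mor G \<Longrightarrow> gdom G g = gcod G h \<Longrightarrow> R (cmp G g h) = R g * R h"
  unfolding is_rep_def by blast

lemma nt_carrier: "nat_trans C d R e S \<alpha> \<Longrightarrow> x \<in> obj C \<Longrightarrow> \<alpha> x \<in> carrier_mat (e x) (d x)"
  unfolding nat_trans_def by blast

lemma nt_nat: "nat_trans C d R e S \<alpha> \<Longrightarrow> g \<in> mor C \<Longrightarrow> S g * \<alpha> (gdom C g) = \<alpha> (gcod C g) * R g"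
  unfolding nat_trans_def by blast

lemma nat_comp: assumes R: "is_rep G d R" and S: "is_rep G e S" and T: "is_rep G k T"
  and a: "nat_trans G d R e S \<alpha>" and b: "nat_trans G e S k T \<beta>"
  shows "nat_trans G d R k T (\<lambda>x. \<beta> x * \<alpha> x)"
  unfolding nat_trans_def
proof (intro conjI ballI)
  fix x assume x: "x \<in> obj G"
  show "\<beta> x * \<alpha> x \<in> carrier_mat (k x) (d x)"
    using nt_carrier[OF a x] nt_carrier[OF b x] by (rule mult_carrier_mat[rotated])
next
  fix g assume g: "g \<in> mor G"
  let ?x = "gdom G g" and ?y = "gcod G g"
  have x: "?x \<in> obj G" and y: "?y \<in> obj G" using g by auto
  have c1: "T g \<in> carrier_mat (k ?y) (k ?x)" using rep_carrier[OF T g] .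
  have c2: "\<beta> ?x \<in> carrier_mat (k ?x) (e ?x)" using nt_carrier[OF b x] .
  have c3: "\<alpha> ?x \<in> carrier_mat (e ?x) (d ?x)" using nt_carrier[OF a x] .
  have c4: "S g \<in> carrier_mat (e ?y) (e ?x)" using rep_carrier[OF S g] .
  have c5: "\<beta> ?y \<in> carrier_mat (k ?y) (e ?y)" using nt_carrier[OF b y] .
  have c6: "\<alpha> ?y \<in> carrier_mat (e ?y) (d ?y)" using nt_carrier[OF a y] .
  have c7: "R g \<in> carrier_mat (d ?y) (d ?x)" using rep_carrier[OF R g] .
  have "T g * (\<beta> ?x * \<alpha> ?x) = (T g * \<beta> ?x) * \<alpha> ?x" using c1 c2 c3 by simp
  also have "\<dots> = (\<beta> ?y * S g) * \<alpha> ?x" using nt_nat[OF b g] by simp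
  also have "\<dots> = \<beta> ?y * (S g * \<alpha> ?x)" using c5 c4 c3 by simp
  also have "\<dots> = \<beta> ?y * (\<alpha> ?y * R g)" using nt_nat[OF a g] by simp
  also have "\<dots> = (\<beta> ?y * \<alpha> ?y) * R g" using c5 c6 c7 by simp
  finally show "T g * (\<beta> ?x * \<alpha> ?x) = (\<beta> ?y * \<alpha> ?y) * R g" .
qed

lemma nat_id: assumes R: "is_rep G d R" shows "nat_trans G d R d R (\<lambda>x. 1\<^sub>m (d x))"
  unfolding nat_trans_def
proof (intro conjI ballI)
  fix g assume g: "g \<in> mor G"
  have c: "R g \<in> carrier_mat (d (gcod G g)) (d (gdom G g))" using rep_carrier[OF R g] .
  then show "R g * 1\<^sub>m (d (gdom G g)) = 1\<^sub>m (d (gcod G g)) * R g" by simp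
qed simp

end

context wsub
begin

lemma char_eq:
  assumes ind: "is_induction G H triv_dim triv_rep dI I \<eta>"
    and g: "g \<in> mor G" and gd: "gdom G g = y" and gc: "gcod G g = y"
  shows "mtr (I g) = mtr (Mm G H g)"
proof -
  have repI: "is_rep G dI I" and natE: "nat_trans H triv_dim triv_rep dI I \<eta>"
    using ind unfolding is_induction_def by blast+
  note U = conjunct2[OF conjunct2[OF conjunct2[OF ind[unfolded is_induction_def]]]]
  have U1: "(\<exists>\<phi>. nat_trans G dI I (dM G H) (Mm G H) \<phi> \<and> (\<forall>x\<in>obj H. \<phi> x * \<eta> x = fu G H x))"
    using spec[OF spec[OF spec[OF U, of "dM G H"], of "Mm G H"], of "fu G H"] Mm_rep fu_nat by blast
  then obtain \<phi> where phn: "nat_trans G dI I (dM G H) (Mm G H) \<phi>" and phe: "\<And>x. x \<in> obj G \<Longrightarrow> \<phi> x * \<eta> x = fu G H x"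
    using Hobj by blast
  have U2: "\<forall>\<phi>' \<psi>'. nat_trans G dI I dI I \<phi>' \<and> (\<forall>x\<in>obj H. \<phi>' x * \<eta> x = \<eta> x) \<and>
                   nat_trans G dI I dI I \<psi>' \<and> (\<forall>x\<in>obj H. \<psi>' x * \<eta> x = \<eta> x)
                   \<longrightarrow> (\<forall>x\<in>obj G. \<phi>' x = \<psi>' x)"
    using spec[OF spec[OF spec[OF U, of dI], of I], of \<eta>] repI natE by blast
  have Ic: "\<And>a. a \<in> mor G \<Longrightarrow> I a \<in> carrier_mat (dI (gcod G a)) (dI (gdom G a))"
    using rep_carrier[OF repI] .
  have Ecar: "\<And>x. x \<in> obj G \<Longrightarrow> \<eta> x \<in> carrier_mat (dI x) 1"
    using nt_carrier[OF natE] Hobj by (simp add: triv_dim_def)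
  have Enat: "\<And>h. h \<in> mor H \<Longrightarrow> I h * \<eta> (gdom G h) = \<eta> (gcod G h)"
  proof -
    fix h assume h: "h \<in> mor H"
    have "I h * \<eta> (gdom G h) = \<eta> (gcod G h) * 1\<^sub>m 1"
      using nt_nat[OF natE h] Hops by (simp add: triv_rep_def)
    also have "\<dots> = \<eta> (gcod G h)" using Ecar[of "gcod G h"] h by simp
    finally show "I h * \<eta> (gdom G h) = \<eta> (gcod G h)" .
  qed
  have phc: "\<And>x. x \<in> obj G \<Longrightarrow> \<phi> x \<in> carrier_mat (dM G H x) (dI x)"
    using nt_carrier[OF phn] .
  have phnat: "\<And>a. a \<in> mor G \<Longrightarrow> Mm G H a * \<phi> (gdom G a) = \<phi> (gcod G a) * I a"
    using nt_nat[OF phn] .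
  define v where "v a = I a * \<eta> (gdom G a)" for a
  have vc: "\<And>a. a \<in> mor G \<Longrightarrow> v a \<in> carrier_mat (dI (gcod G a)) 1"
    unfolding v_def using Ic Ecar by (meson dom_obj mult_carrier_mat)
  have vcls: "v b = v a" if a: "a \<in> mor G" and b: "b \<in> cls G H a" for a b
  proof -
    obtain h where h: "h \<in> mor H" "gcod G h = gdom G a" "b = cmp G a h"
      using cls_elem(3)[OF a b] by blast
    have hG: "h \<in> mor G" using h by simp
    have db: "gdom G b = gdom G h" using h hG a by simp
    have "v b = I (cmp G a h) * \<eta> (gdom G h)" unfolding v_def using db h by simp
    also have "\<dots> = (I a * I h) * \<eta> (gdom G h)" using rep_cmp[OF repI a hG] h by simp
    also have "\<dots> = I a * (I h * \<eta> (gdom G h))"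
      using Ic[OF a] Ic[OF hG] Ecar[of "gdom G h"] hG h by simp
    also have "\<dots> = I a * \<eta> (gdom G a)" using Enat[OF h(1)] h by simp
    finally show ?thesis unfolding v_def .
  qed
  have vrep: "v (rep G H C) = v a" if C: "C \<in> Xs G H z" and a: "a \<in> mor G" and Ca: "C = cls G H a" for C z a
  proof -
    have "rep G H C \<in> C" using self_cls[OF rep(1)[OF C]] rep(2)[OF C] by simp
    then show ?thesis using vcls[OF a] Ca by simp
  qed
  define \<psi> where "\<psi> z = mat (dI z) (dM G H z) (\<lambda>(i,j). v (rep G H (en G H z j)) $$ (i,0))" for z
  have psc: "\<And>z. \<psi> z \<in> carrier_mat (dI z) (dM G H z)" unfolding \<psi>_def by simp
  have rz: "rep G H (en G H z j) \<in> mor G" "gcod G (rep G H (en G H z j)) = z"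
     "cls G H (rep G H (en G H z j)) = en G H z j" if "j < dM G H z" for z j
    using rep[OF en_in[OF that]] by auto
  have colpsi: "(A * \<psi> z) $$ (i,j) = (A * v (rep G H (en G H z j))) $$ (i,0)"
    if A: "A \<in> carrier_mat n (dI z)" and i: "i < n" and j: "j < dM G H z" for A n z i j
  proof -
    have vz: "v (rep G H (en G H z j)) \<in> carrier_mat (dI z) 1" using vc[OF rz(1)[OF j]] rz(2)[OF j] by simp
    have "(A * \<psi> z) $$ (i,j) = (\<Sum>k=0..<dI z. A $$ (i,k) * \<psi> z $$ (k,j))"
      using mult_entry[OF A psc i j] .
    also have "\<dots> = (\<Sum>k=0..<dI z. A $$ (i,k) * v (rep G H (en G H z j)) $$ (k,0))"
      using j unfolding \<psi>_def by (intro sum.cong) auto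
    also have "\<dots> = (A * v (rep G H (en G H z j))) $$ (i,0)"
      using mult_entry[OF A vz i, of 0] by simp
    finally show ?thesis .
  qed
  have psnat: "nat_trans G (dM G H) (Mm G H) dI I \<psi>"
    unfolding nat_trans_def
  proof (intro conjI ballI)
    fix x assume "x \<in> obj G" then show "\<psi> x \<in> carrier_mat (dI x) (dM G H x)" using psc by simp
  next
    fix a assume a: "a \<in> mor G"
    let ?x = "gdom G a" and ?z = "gcod G a"
    show "I a * \<psi> ?x = \<psi> ?z * Mm G H a"
    proof (rule eq_matI)
      fix i j assume "i < dim_row (\<psi> ?z * Mm G H a)" "j < dim_col (\<psi> ?z * Mm G H a)"
      then have i: "i < dI ?z" and j: "j < dM G H ?x" using psc[of ?z] by auto
      define b where "b = rep G H (en G H ?x j)"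
      have b: "b \<in> mor G" "gcod G b = ?x" "cls G H b = en G H ?x j" using rz[OF j] unfolding b_def by auto
      have ab: "cmp G a b \<in> mor G" "gdom G (cmp G a b) = gdom G b" "gcod G (cmp G a b) = ?z"
        using a b by auto
      have "(I a * \<psi> ?x) $$ (i,j) = (I a * v b) $$ (i,0)"
        using colpsi[OF Ic[OF a] i j] unfolding b_def .
      also have "I a * v b = v (cmp G a b)"
      proof -
        have "I a * v b = (I a * I b) * \<eta> (gdom G b)" unfolding v_def
          using Ic[OF a] Ic[OF b(1)] Ecar[of "gdom G b"] b by simp
        also have "\<dots> = v (cmp G a b)" unfolding v_def using rep_cmp[OF repI a b(1)] b ab by simp
        finally show ?thesis .
      qed
      finally have L: "(I a * \<psi> ?x) $$ (i,j) = v (cmp G a b) $$ (i,0)" .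
      have ax: "act G a (en G H ?x j) \<in> Xs G H ?z" using act_X[OF a en_in[OF j]] .
      obtain k0 where k0: "k0 < dM G H ?z" "en G H ?z k0 = act G a (en G H ?x j)" using en_surj[OF ax] by blast
      have "(\<psi> ?z * Mm G H a) $$ (i,j) = (\<Sum>k=0..<dM G H ?z. \<psi> ?z $$ (i,k) * Mm G H a $$ (k,j))"
        using mult_entry[OF psc Mm_carrier i j] .
      also have "\<dots> = (\<Sum>k=0..<dM G H ?z. if act G a (en G H ?x j) = en G H ?z k then
           v (rep G H (en G H ?z k)) $$ (i,0) else 0)"
        using i j unfolding \<psi>_def by (intro sum.cong) (auto simp: Mm_entry)
      also have "\<dots> = v (rep G H (en G H ?z k0)) $$ (i,0)"
        by (rule sum_delta_nat[OF k0(1)]) (use k0 en_inj in metis)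
      also have "v (rep G H (en G H ?z k0)) = v (cmp G a b)"
      proof -
        have "en G H ?z k0 = cls G H (cmp G a b)" using k0(2) act_cls[OF a b(1)] b by simp
        then show ?thesis using vrep[OF en_in[OF k0(1)] ab(1)] by simp
      qed
      finally show "(I a * \<psi> ?x) $$ (i,j) = (\<psi> ?z * Mm G H a) $$ (i,j)" using L by simp
    qed (use psc[of ?z] psc[of ?x] Ic[OF a] Mm_carrier[of a] in auto)
  qed
  have phps: "\<phi> z * \<psi> z = 1\<^sub>m (dM G H z)" if z: "z \<in> obj G" for z
  proof (rule eq_matI)
    fix i j assume "i < dim_row (1\<^sub>m (dM G H z))" "j < dim_col (1\<^sub>m (dM G H z))"
    then have i: "i < dM G H z" and j: "j < dM G H z" by auto
    define b where "b = rep G H (en G H z j)"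
    have b: "b \<in> mor G" "gcod G b = z" "cls G H b = en G H z j" using rz[OF j] unfolding b_def by auto
    let ?x = "gdom G b"
    have x: "?x \<in> obj G" using b by simp
    have "(\<phi> z * \<psi> z) $$ (i,j) = (\<phi> z * v b) $$ (i,0)"
      using colpsi[OF phc[OF z] i j] unfolding b_def .
    also have "\<phi> z * v b = Mm G H b * fu G H ?x"
    proof -
      have "\<phi> z * v b = (\<phi> z * I b) * \<eta> ?x" unfolding v_def
        using phc[OF z] Ic[OF b(1)] Ecar[OF x] b by simp
      also have "\<dots> = (Mm G H b * \<phi> ?x) * \<eta> ?x" using phnat[OF b(1)] b by simp
      also have "\<dots> = Mm G H b * (\<phi> ?x * \<eta> ?x)" using Mm_carrier[of b] phc[OF x] Ecar[OF x] by simp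
      also have "\<dots> = Mm G H b * fu G H ?x" using phe[OF x] by simp
      finally show ?thesis .
    qed
    also have "(Mm G H b * fu G H ?x) $$ (i,0) = (if cls G H b = en G H z i then 1 else 0)"
      using Mm_fu[OF b(1)] i b by simp
    also have "\<dots> = 1\<^sub>m (dM G H z) $$ (i,j)" using b(3) en_inj[OF i j] i j by auto
    finally show "(\<phi> z * \<psi> z) $$ (i,j) = 1\<^sub>m (dM G H z) $$ (i,j)" .
  qed (use phc psc z in auto)
  have psfu: "\<psi> z * fu G H z = \<eta> z" if z: "z \<in> obj G" for z
  proof (rule eq_matI)
    fix i j assume "i < dim_row (\<eta> z)" "j < dim_col (\<eta> z)"
    then have i: "i < dI z" and j0: "j = 0" using Ecar[OF z] by auto
    have cz: "cls G H (idn G z) \<in> Xs G H z" using Xs_I[of "idn G z"] z by simp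
    obtain k0 where k0: "k0 < dM G H z" "en G H z k0 = cls G H (idn G z)" using en_surj[OF cz] by blast
    have "(\<psi> z * fu G H z) $$ (i,0) = (\<Sum>k=0..<dM G H z. \<psi> z $$ (i,k) * fu G H z $$ (k,0))"
      using mult_entry[OF psc fu_carrier i, of 0] by simp
    also have "\<dots> = (\<Sum>k=0..<dM G H z. if en G H z k = cls G H (idn G z) then
         v (rep G H (en G H z k)) $$ (i,0) else 0)"
      using i unfolding \<psi>_def by (intro sum.cong) (auto simp: fu_entry)
    also have "\<dots> = v (rep G H (en G H z k0)) $$ (i,0)"
      by (rule sum_delta_nat[OF k0(1)]) (use k0 en_inj in metis)
    also have "v (rep G H (en G H z k0)) = v (idn G z)"
      using vrep[OF en_in[OF k0(1)], of "idn G z"] k0(2) z by simp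
    also have "v (idn G z) = \<eta> z" unfolding v_def using rep_id[OF repI z] Ecar[OF z] z by simp
    finally show "(\<psi> z * fu G H z) $$ (i,j) = \<eta> z $$ (i,j)" using j0 by simp
  qed (use psc[of z] fu_carrier[of z] Ecar[OF z] in auto)
  have comp_nat: "nat_trans G dI I dI I (\<lambda>z. \<psi> z * \<phi> z)"
    by (rule nat_comp[OF repI Mm_rep repI phn psnat])
  have comp_eta: "\<forall>x\<in>obj H. (\<psi> x * \<phi> x) * \<eta> x = \<eta> x"
  proof
    fix x assume "x \<in> obj H"
    then have x: "x \<in> obj G" using Hobj by simp
    have "(\<psi> x * \<phi> x) * \<eta> x = \<psi> x * (\<phi> x * \<eta> x)" using psc[of x] phc[OF x] Ecar[OF x] by simp
    also have "\<dots> = \<eta> x" using phe[OF x] psfu[OF x] by simp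
    finally show "(\<psi> x * \<phi> x) * \<eta> x = \<eta> x" .
  qed
  have id_eta: "\<forall>x\<in>obj H. 1\<^sub>m (dI x) * \<eta> x = \<eta> x"
  proof
    fix x assume "x \<in> obj H"
    then have x: "x \<in> obj G" using Hobj by simp
    show "1\<^sub>m (dI x) * \<eta> x = \<eta> x" using Ecar[OF x] by simp
  qed
  have psph: "\<forall>x\<in>obj G. \<psi> x * \<phi> x = 1\<^sub>m (dI x)"
    using U2 comp_nat comp_eta nat_id[OF repI] id_eta by blast
  have y: "y \<in> obj G" using g gd by auto
  have Igc: "I g \<in> carrier_mat (dI y) (dI y)" using Ic[OF g] gd gc by simp
  have Mgc: "Mm G H g \<in> carrier_mat (dM G H y) (dM G H y)" using Mm_carrier[of g] gd gc by simp
  have "I g = (\<psi> y * \<phi> y) * I g" using psph y Igc by simp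
  also have "\<dots> = \<psi> y * (\<phi> y * I g)" using psc[of y] phc[OF y] Igc by simp
  also have "\<phi> y * I g = Mm G H g * \<phi> y" using phnat[OF g] gd gc by simp
  finally have Ig: "I g = \<psi> y * (Mm G H g * \<phi> y)" .
  have "mtr (I g) = mtr ((Mm G H g * \<phi> y) * \<psi> y)"
    unfolding Ig by (rule mtr_comm[OF psc]) (use Mgc phc[OF y] in simp)
  also have "\<dots> = mtr (Mm G H g * (\<phi> y * \<psi> y))" using Mgc phc[OF y] psc[of y] by simp
  also have "\<dots> = mtr (Mm G H g)" using phps[OF y] right_mult_one_mat[OF Mgc] by simp
  finally show ?thesis .
qed

end

lemma card_filter_sum: "finite A \<Longrightarrow> card {x\<in>A. P x} = (\<Sum>x\<in>A. if P x then 1 else 0)"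
  by (simp add: sum.inter_filter[symmetric])

context gpdl
begin

lemma inv_cancel1[simp]: "a \<in> mor G \<Longrightarrow> x \<in> mor G \<Longrightarrow> gcod G x = gdom G a \<Longrightarrow> cmp G (ginv G a) (cmp G a x) = x"
  using left_inv_cmp by simp

lemma inv_cancel2[simp]: "a \<in> mor G \<Longrightarrow> x \<in> mor G \<Longrightarrow> gcod G x = gcod G a \<Longrightarrow> cmp G a (cmp G (ginv G a) x) = x"
proof -
  assume a: "a \<in> mor G" and x: "x \<in> mor G" and c: "gcod G x = gcod G a"
  have "cmp G (cmp G a (ginv G a)) x = cmp G a (cmp G (ginv G a) x)"
    by (rule assoc) (use a x c in simp_all)
  then have "cmp G a (cmp G (ginv G a) x) = cmp G (cmp G a (ginv G a)) x" by simp
  also have "\<dots> = x" using a x c idl[OF x] by simp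
  finally show ?thesis .
qed

lemma character_mtr: assumes R: "is_rep G d R" and g: "g \<in> mor G" "gdom G g = y" "gcod G g = y"
  shows "character G d R g = mtr (R g)"
proof -
  have y: "y \<in> obj G" using g by auto
  have Rc: "R g \<in> carrier_mat (d y) (d y)" using rep_carrier[OF R g(1)] g by simp
  have rb: "rep_basis G d = Sigma (obj G) (\<lambda>x. {0..<d x})" unfolding rep_basis_def by auto
  have "character G d R g = (\<Sum>(x,i)\<in>Sigma (obj G) (\<lambda>x. {0..<d x}). rep_hat G R g (x,i) (x,i))"
    unfolding character_def rb by (intro sum.cong refl) auto
  also have "\<dots> = (\<Sum>x\<in>obj G. \<Sum>i=0..<d x. rep_hat G R g (x,i) (x,i))"
    by (rule sum.Sigma[symmetric]) (use fin_obj in auto)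
  also have "\<dots> = (\<Sum>x\<in>obj G. if x = y then (\<Sum>i=0..<d y. R g $$ (i,i)) else 0)"
    unfolding rep_hat_def using g by (intro sum.cong refl) auto
  also have "\<dots> = (\<Sum>i=0..<d y. R g $$ (i,i))" using y fin_obj by simp
  also have "\<dots> = mtr (R g)" unfolding mtr_def using Rc by simp
  finally show ?thesis .
qed

end

context wsub
begin

lemma mtr_Mm: assumes g: "g \<in> mor G" "gdom G g = y" "gcod G g = y"
  shows "mtr (Mm G H g) = of_nat (card {C \<in> Xs G H y. act G g C = C})"
proof -
  have "mtr (Mm G H g) = (\<Sum>i=0..<dM G H y. if act G g (en G H y i) = en G H y i then 1 else 0)"
    unfolding mtr_def using g by (intro sum.cong) (auto simp: Mm_entry)
  also have "\<dots> = (\<Sum>C\<in>Xs G H y. if act G g C = C then 1 else 0)"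
    by (rule sum.reindex_bij_betw[OF en_bij, of "\<lambda>C. if act G g C = C then 1 else 0"])
  also have "\<dots> = of_nat (card {C \<in> Xs G H y. act G g C = C})"
    unfolding card_filter_sum[OF X_fin] of_nat_sum by (intro sum.cong) auto
  finally show ?thesis .
qed

end

locale two = gpdl G for G :: "('o, 'm) gpd" +
  fixes H K :: "('o, 'm) gpd"
  assumes wH: "wide_subgroupoid G H" and cH: "connected_gpd H"
    and wK: "wide_subgroupoid G K" and cK: "connected_gpd K"

sublocale two \<subseteq> Hs: wsub G H
  by (rule wsub.intro[OF gpdl_axioms]) (simp add: wsub_axioms_def wH cH)

sublocale two \<subseteq> Ks: wsub G K
  by (rule wsub.intro[OF gpdl_axioms]) (simp add: wsub_axioms_def wK cK)

context two
begin

abbreviation "dc m \<equiv> double_coset G H m K"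

lemma dc_mem: "m \<in> mor G \<Longrightarrow> h \<in> mor H \<Longrightarrow> k \<in> mor K \<Longrightarrow> gdom G h = gcod G m \<Longrightarrow> gcod G k = gdom G m
   \<Longrightarrow> cmp G (cmp G h m) k \<in> dc m"
  unfolding double_coset_def by blast

lemma dc_elem: "t \<in> dc m \<Longrightarrow> \<exists>h k. h \<in> mor H \<and> k \<in> mor K \<and> gdom G h = gcod G m \<and> gcod G k = gdom G m
   \<and> t = cmp G (cmp G h m) k"
  unfolding double_coset_def by blast

lemma dc_self: assumes m: "m \<in> mor G" shows "m \<in> dc m"
proof -
  have "cmp G (cmp G (idn G (gcod G m)) m) (idn G (gdom G m)) = m" using m by simp
  then show ?thesis using dc_mem[of m "idn G (gcod G m)" "idn G (gdom G m)"] m by simp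
qed

lemma dc_sub: "t \<in> dc m \<Longrightarrow> m \<in> mor G \<Longrightarrow> t \<in> mor G"
  using dc_elem[of t m] by auto

lemma dc_eq: assumes m: "m \<in> mor G" and m': "m' \<in> dc m" shows "dc m' = dc m"
proof -
  obtain h k where hk: "h \<in> mor H" "k \<in> mor K" "gdom G h = gcod G m" "gcod G k = gdom G m"
    "m' = cmp G (cmp G h m) k" using dc_elem[OF m'] by blast
  obtain x z x' z' where ob: "gdom G m = z" "gcod G m = x" "gcod G h = x'" "gdom G k = z'" by blast
  have hG: "h \<in> mor G" and kG: "k \<in> mor G" using hk by auto
  have m'G: "m' \<in> mor G" and dm': "gdom G m' = z'" and cm': "gcod G m' = x'"
    using hk m hG kG ob by auto
  show ?thesis
  proof
    show "dc m' \<subseteq> dc m"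
    proof
      fix t assume "t \<in> dc m'"
      then obtain h' k' where hk': "h' \<in> mor H" "k' \<in> mor K" "gdom G h' = x'" "gcod G k' = z'"
        "t = cmp G (cmp G h' m') k'" using dc_elem[of t m'] dm' cm' by auto
      have "t = cmp G (cmp G (cmp G h' h) m) (cmp G k k')"
        using hk hk' hG kG m ob by (simp add: assoc)
      moreover have "cmp G h' h \<in> mor H" "cmp G k k' \<in> mor K" using hk hk' ob by auto
      moreover have "gdom G (cmp G h' h) = gcod G m" "gcod G (cmp G k k') = gdom G m"
        using hk hk' ob hG kG by auto
      ultimately show "t \<in> dc m" using dc_mem[OF m] by metis
    qed
  next
    show "dc m \<subseteq> dc m'"
    proof
      fix t assume "t \<in> dc m"
      then obtain h' k' where hk': "h' \<in> mor H" "k' \<in> mor K" "gdom G h' = x" "gcod G k' = z"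
        "t = cmp G (cmp G h' m) k'" using dc_elem[of t m] ob by auto
      have h'G: "h' \<in> mor G" and k'G: "k' \<in> mor G" using hk' by auto
      have "cmp G (cmp G (cmp G h' (ginv G h)) m') (cmp G (ginv G k) k') = t"
        using hk hk' hG kG h'G k'G m ob by (simp add: assoc)
      moreover have "cmp G h' (ginv G h) \<in> mor H" "cmp G (ginv G k) k' \<in> mor K" using hk hk' ob hG kG by auto
      moreover have "gdom G (cmp G h' (ginv G h)) = gcod G m'" "gcod G (cmp G (ginv G k) k') = gdom G m'"
        using hk hk' ob hG kG dm' cm' by auto
      ultimately show "t \<in> dc m'" using dc_mem[OF m'G] by metis
    qed
  qed
qed

lemma dc_iff: "m \<in> mor G \<Longrightarrow> m' \<in> mor G \<Longrightarrow> dc m = dc m' \<longleftrightarrow> m' \<in> dc m"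
  using dc_eq[of m m'] dc_self[of m'] by auto

end

context gpdl
begin

lemma idl'[simp]: "g \<in> mor G \<Longrightarrow> gcod G g = x \<Longrightarrow> cmp G (idn G x) g = g"
  using idl by blast

lemma idr'[simp]: "g \<in> mor G \<Longrightarrow> gdom G g = x \<Longrightarrow> cmp G g (idn G x) = g"
  using idr by blast

end

definition act2 :: "('o, 'm) gpd \<Rightarrow> 'm \<Rightarrow> 'm set \<times> 'm set \<Rightarrow> 'm set \<times> 'm set" where
  "act2 G g p = (act G g (fst p), act G g (snd p))"

definition Psi :: "('o, 'm) gpd \<Rightarrow> ('o, 'm) gpd \<Rightarrow> ('o, 'm) gpd \<Rightarrow> 'm set \<times> 'm set \<Rightarrow> 'm set" where
  "Psi G H K p = double_coset G H (cmp G (ginv G (rep G H (fst p))) (rep G K (snd p))) K"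

context two
begin

abbreviation "PP y \<equiv> Xs G H y \<times> Xs G K y"

lemma iso_iff: "g \<in> isotropy G y \<longleftrightarrow> g \<in> mor G \<and> gdom G g = y \<and> gcod G g = y"
  unfolding isotropy_def by simp

lemma iso_fin: "finite (isotropy G y)"
  unfolding isotropy_def using fin_mor by simp

lemma PP_fin: "finite (PP y)"
  using Hs.X_fin Ks.X_fin by simp

lemma act2_PP: "g \<in> isotropy G y \<Longrightarrow> p \<in> PP y \<Longrightarrow> act2 G g p \<in> PP y"
  unfolding act2_def iso_iff using Hs.act_X[of g "fst p"] Ks.act_X[of g "snd p"] by (cases p) auto

lemma act2_cmp: "g \<in> isotropy G y \<Longrightarrow> h \<in> isotropy G y \<Longrightarrow> p \<in> PP y \<Longrightarrow>
   act2 G (cmp G g h) p = act2 G g (act2 G h p)"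
  unfolding act2_def iso_iff using Hs.act_cmp[of g h "fst p"] Ks.act_cmp[of g h "snd p"] by (cases p) auto

lemma act2_id: "p \<in> PP y \<Longrightarrow> act2 G (idn G y) p = p"
  unfolding act2_def using Hs.act_id[of "fst p" y] Ks.act_id[of "snd p" y] by (cases p) auto

lemma iso_cmp: "g \<in> isotropy G y \<Longrightarrow> h \<in> isotropy G y \<Longrightarrow> cmp G g h \<in> isotropy G y"
  unfolding iso_iff by auto

lemma iso_inv: "g \<in> isotropy G y \<Longrightarrow> ginv G g \<in> isotropy G y"
  unfolding iso_iff by auto

lemma iso_id: "y \<in> obj G \<Longrightarrow> idn G y \<in> isotropy G y"
  unfolding iso_iff by auto

lemma Psi_dc: assumes p: "p \<in> PP y" shows "Psi G H K p \<in> double_cosets G H K"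
proof -
  obtain C D where CD: "p = (C, D)" "C \<in> Xs G H y" "D \<in> Xs G K y" using p by auto
  have "cmp G (ginv G (rep G H C)) (rep G K D) \<in> mor G"
    using Hs.rep[OF CD(2)] Ks.rep[OF CD(3)] by simp
  then show ?thesis unfolding Psi_def double_cosets_def CD by auto
qed

lemma Psi_surj: assumes y: "y \<in> obj G" and d: "d \<in> double_cosets G H K"
  shows "\<exists>p\<in>PP y. Psi G H K p = d"
proof -
  obtain m0 where m0: "m0 \<in> mor G" "d = dc m0" using d unfolding double_cosets_def by auto
  obtain x z where xz: "gdom G m0 = z" "gcod G m0 = x" by blast
  have x: "x \<in> obj G" using m0 xz by auto
  obtain a0 where a0: "a0 \<in> mor H" "gdom G a0 = x" "gcod G a0 = y" using Hs.H_conn[OF x y] by blast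
  have a0G: "a0 \<in> mor G" using a0 by simp
  define b0 where "b0 = cmp G a0 m0"
  have b0: "b0 \<in> mor G" "gcod G b0 = y" "gdom G b0 = z" unfolding b0_def using a0G a0 m0 xz by auto
  define C where "C = cls G H a0"
  define D where "D = cls G K b0"
  have C: "C \<in> Xs G H y" unfolding C_def using Hs.Xs_I[OF a0G] a0 by simp
  have D: "D \<in> Xs G K y" unfolding D_def using Ks.Xs_I[OF b0(1)] b0 by simp
  define a where "a = rep G H C"
  define b where "b = rep G K D"
  have a: "a \<in> mor G" "gcod G a = y" "a \<in> cls G H a0"
    using Hs.rep[OF C] Hs.self_cls[of a] unfolding a_def C_def by auto
  have b: "b \<in> mor G" "gcod G b = y" "b \<in> cls G K b0"
    using Ks.rep[OF D] Ks.self_cls[of b] unfolding b_def D_def by auto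
  obtain h1 where h1: "h1 \<in> mor H" "gcod G h1 = x" "a = cmp G a0 h1"
    using Hs.cls_elem(3)[OF a0G a(3)] a0 by auto
  obtain k1 where k1: "k1 \<in> mor K" "gcod G k1 = z" "b = cmp G b0 k1"
    using Ks.cls_elem(3)[OF b0(1) b(3)] b0 by auto
  have h1G: "h1 \<in> mor G" and k1G: "k1 \<in> mor G" using h1 k1 by auto
  obtain u w where uw: "gdom G h1 = u" "gdom G k1 = w" by blast
  define m where "m = cmp G (ginv G a) b"
  have mG: "m \<in> mor G" unfolding m_def using a b by simp
  have am: "cmp G a m = b" unfolding m_def using a b by simp
  define m1 where "m1 = cmp G (cmp G (ginv G h1) m0) k1"
  have m1G: "m1 \<in> mor G" "gcod G m1 = u" unfolding m1_def using h1 h1G k1 k1G m0 xz uw by auto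
  have cm: "gcod G m = u" unfolding m_def using a b h1 h1G a0 a0G uw by simp
  have am1: "cmp G a m1 = b"
    unfolding m1_def h1(3) k1(3) b0_def using h1 h1G k1 k1G m0 xz uw a0 a0G by (simp add: assoc)
  have "m = m1" by (rule cancel_l[OF a(1) mG m1G(1)]) (use am am1 cm m1G a h1 h1G a0 a0G uw in simp_all)
  then have "m \<in> dc m0" unfolding m1_def using dc_mem[OF m0(1)] h1 k1 xz by (simp add: Hs.H_inv)
  then have "dc m = d" using dc_eq[OF m0(1)] m0 by simp
  moreover have "Psi G H K (C, D) = dc m" unfolding Psi_def m_def a_def b_def by simp
  ultimately show ?thesis using C D by blast
qed

lemma Psi_orbit: assumes y: "y \<in> obj G" and p: "p \<in> PP y" and q: "q \<in> PP y"
  shows "Psi G H K p = Psi G H K q \<longleftrightarrow> (\<exists>g\<in>isotropy G y. act2 G g p = q)"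
proof -
  obtain C D where CD: "p = (C, D)" "C \<in> Xs G H y" "D \<in> Xs G K y" using p by auto
  obtain C' D' where CD': "q = (C', D')" "C' \<in> Xs G H y" "D' \<in> Xs G K y" using q by auto
  define a where "a = rep G H C"
  define b where "b = rep G K D"
  define a' where "a' = rep G H C'"
  define b' where "b' = rep G K D'"
  have a: "a \<in> mor G" "gcod G a = y" "cls G H a = C" using Hs.rep[OF CD(2)] unfolding a_def by auto
  have b: "b \<in> mor G" "gcod G b = y" "cls G K b = D" using Ks.rep[OF CD(3)] unfolding b_def by auto
  have a': "a' \<in> mor G" "gcod G a' = y" "cls G H a' = C'" using Hs.rep[OF CD'(2)] unfolding a'_def by auto
  have b': "b' \<in> mor G" "gcod G b' = y" "cls G K b' = D'" using Ks.rep[OF CD'(3)] unfolding b'_def by auto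
  obtain u w u' w' where ob: "gdom G a = u" "gdom G b = w" "gdom G a' = u'" "gdom G b' = w'" by blast
  define m where "m = cmp G (ginv G a) b"
  define m' where "m' = cmp G (ginv G a') b'"
  have mG: "m \<in> mor G" "gdom G m = w" "gcod G m = u" unfolding m_def using a b ob by auto
  have m'G: "m' \<in> mor G" "gdom G m' = w'" "gcod G m' = u'" unfolding m'_def using a' b' ob by auto
  have am: "cmp G a m = b" unfolding m_def using a b by simp
  have am': "cmp G a' m' = b'" unfolding m'_def using a' b' by simp
  have Pp: "Psi G H K p = dc m" unfolding Psi_def m_def a_def b_def CD by simp
  have Pq: "Psi G H K q = dc m'" unfolding Psi_def m'_def a'_def b'_def CD' by simp
  show ?thesis
  proof
    assume "Psi G H K p = Psi G H K q"
    then have "m' \<in> dc m" using dc_iff[OF mG(1) m'G(1)] Pp Pq by simp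
    then obtain h k where hk: "h \<in> mor H" "k \<in> mor K" "gdom G h = u" "gcod G k = w"
      "m' = cmp G (cmp G h m) k" using dc_elem[of m' m] mG by auto
    have hG: "h \<in> mor G" and kG: "k \<in> mor G" using hk by auto
    have ch: "gcod G h = u'" and dk: "gdom G k = w'"
      using hk hG kG mG m'G by auto
    define g where "g = cmp G (cmp G a' h) (ginv G a)"
    have g: "g \<in> isotropy G y" unfolding g_def iso_iff using a a' hG ob ch hk by auto
    have ga: "cmp G g a = cmp G a' h" unfolding g_def using a a' hG ob ch hk by (simp add: assoc)
    have gb: "cmp G g b = cmp G b' (ginv G k)"
    proof -
      have "cmp G g b = cmp G a' (cmp G h m)"
        unfolding g_def am[symmetric] using a a' hG ob ch hk mG by (simp add: assoc)
      also have "\<dots> = cmp G b' (ginv G k)"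
        unfolding am'[symmetric] hk(5) using a a' hG kG ob ch dk hk mG by (simp add: assoc)
      finally show ?thesis .
    qed
    have "act G g C = C'"
    proof -
      have "act G g C = cls G H (cmp G a' h)" using Hs.act_cls[of g a] g a ga unfolding iso_iff by auto
      also have "\<dots> = cls G H a'" by (rule Hs.cls_eq[OF a'(1)], rule Hs.cls_mem) (use a' hk ob ch in auto)
      finally show ?thesis using a' by simp
    qed
    moreover have "act G g D = D'"
    proof -
      have "act G g D = cls G K (cmp G b' (ginv G k))" using Ks.act_cls[of g b] g b gb unfolding iso_iff by auto
      also have "\<dots> = cls G K b'" by (rule Ks.cls_eq[OF b'(1)], rule Ks.cls_mem) (use b' hk kG ob dk in auto)
      finally show ?thesis using b' by simp
    qed
    ultimately show "\<exists>g\<in>isotropy G y. act2 G g p = q" using g CD CD' unfolding act2_def by auto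
  next
    assume "\<exists>g\<in>isotropy G y. act2 G g p = q"
    then obtain g where g: "g \<in> isotropy G y" "act G g C = C'" "act G g D = D'"
      unfolding act2_def CD CD' by auto
    have gG: "g \<in> mor G" "gdom G g = y" "gcod G g = y" using g(1) unfolding iso_iff by auto
    have "cls G H (cmp G g a) = cls G H a'" using Hs.act_cls[of g a] gG a a' g(2) by simp
    then have "a' \<in> cls G H (cmp G g a)" using Hs.cls_eq_iff[of "cmp G g a" a'] gG a a' by simp
    then obtain h where h: "h \<in> mor H" "gcod G h = u" "a' = cmp G (cmp G g a) h"
      using Hs.cls_elem(3)[of "cmp G g a" a'] gG a ob by auto
    have "cls G K (cmp G g b) = cls G K b'" using Ks.act_cls[of g b] gG b b' g(3) by simp
    then have "b' \<in> cls G K (cmp G g b)" using Ks.cls_eq_iff[of "cmp G g b" b'] gG b b' by simp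
    then obtain k where k: "k \<in> mor K" "gcod G k = w" "b' = cmp G (cmp G g b) k"
      using Ks.cls_elem(3)[of "cmp G g b" b'] gG b ob by auto
    have hG: "h \<in> mor G" and kG: "k \<in> mor G" using h k by auto
    have dh: "gdom G h = u'" using h hG gG a ob a' by auto
    have dk: "gdom G k = w'" using k kG gG b ob b' by auto
    define m1 where "m1 = cmp G (cmp G (ginv G h) m) k"
    have m1G: "m1 \<in> mor G" "gcod G m1 = u'" unfolding m1_def using hG kG h k dh dk mG by auto
    have am1: "cmp G a' m1 = b'"
    proof -
      have "cmp G a' m1 = cmp G g (cmp G a (cmp G m k))"
        unfolding m1_def h(3) using hG kG h k dh dk mG gG a ob by (simp add: assoc)
      also have "\<dots> = b'" unfolding k(3) am[symmetric] using kG k dk mG gG a ob by (simp add: assoc)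
      finally show ?thesis .
    qed
    have "m' = m1" by (rule cancel_l[OF a'(1) m'G(1) m1G(1)]) (use am' am1 m'G m1G ob in simp_all)
    then have "m' \<in> dc m" unfolding m1_def using dc_mem[OF mG(1), of "ginv G h" k] h k hG dh mG by simp
    then show "Psi G H K p = Psi G H K q" using Pp Pq dc_eq[OF mG(1)] by simp
  qed
qed

end

context two
begin

lemma stab_card: assumes y: "y \<in> obj G" and p0: "p0 \<in> PP y" and g1: "g1 \<in> isotropy G y"
  shows "card {g \<in> isotropy G y. act2 G g p0 = act2 G g1 p0} = card {g \<in> isotropy G y. act2 G g (act2 G g1 p0) = act2 G g1 p0}"
proof (rule bij_betw_same_card[of "\<lambda>g. cmp G g (ginv G g1)"], rule bij_betw_byWitness[where f'="\<lambda>s. cmp G s g1"])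
  let ?q = "act2 G g1 p0"
  have g1G: "g1 \<in> mor G" "gdom G g1 = y" "gcod G g1 = y" using g1 unfolding iso_iff by auto
  have q: "?q \<in> PP y" using act2_PP[OF g1 p0] .
  have inv1: "act2 G (ginv G g1) ?q = p0"
  proof -
    have "act2 G (ginv G g1) ?q = act2 G (cmp G (ginv G g1) g1) p0"
      using act2_cmp[OF iso_inv[OF g1] g1 p0] by simp
    also have "\<dots> = p0" using act2_id[OF p0] g1G by simp
    finally show ?thesis .
  qed
  show "\<forall>a\<in>{g \<in> isotropy G y. act2 G g p0 = ?q}. cmp G (cmp G a (ginv G g1)) g1 = a"
  proof
    fix a assume "a \<in> {g \<in> isotropy G y. act2 G g p0 = ?q}"
    then have aG: "a \<in> mor G" "gdom G a = y" "gcod G a = y" unfolding iso_iff by auto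
    show "cmp G (cmp G a (ginv G g1)) g1 = a" using aG g1G by (simp add: assoc)
  qed
  show "\<forall>a\<in>{g \<in> isotropy G y. act2 G g ?q = ?q}. cmp G (cmp G a g1) (ginv G g1) = a"
  proof
    fix a assume "a \<in> {g \<in> isotropy G y. act2 G g ?q = ?q}"
    then have aG: "a \<in> mor G" "gdom G a = y" "gcod G a = y" unfolding iso_iff by auto
    show "cmp G (cmp G a g1) (ginv G g1) = a" using aG g1G by (simp add: assoc)
  qed
  show "(\<lambda>g. cmp G g (ginv G g1)) ` {g \<in> isotropy G y. act2 G g p0 = ?q} \<subseteq> {g \<in> isotropy G y. act2 G g ?q = ?q}"
  proof
    fix s assume "s \<in> (\<lambda>g. cmp G g (ginv G g1)) ` {g \<in> isotropy G y. act2 G g p0 = ?q}"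
    then obtain a where a: "a \<in> isotropy G y" "act2 G a p0 = ?q" "s = cmp G a (ginv G g1)" by auto
    have "s \<in> isotropy G y" using a iso_cmp iso_inv g1 by simp
    moreover have "act2 G s ?q = ?q"
      using a act2_cmp[OF a(1) iso_inv[OF g1] q] inv1 by simp
    ultimately show "s \<in> {g \<in> isotropy G y. act2 G g ?q = ?q}" by simp
  qed
  show "(\<lambda>s. cmp G s g1) ` {g \<in> isotropy G y. act2 G g ?q = ?q} \<subseteq> {g \<in> isotropy G y. act2 G g p0 = ?q}"
  proof
    fix s assume "s \<in> (\<lambda>s. cmp G s g1) ` {g \<in> isotropy G y. act2 G g ?q = ?q}"
    then obtain a where a: "a \<in> isotropy G y" "act2 G a ?q = ?q" "s = cmp G a g1" by auto
    have "s \<in> isotropy G y" using a iso_cmp g1 by simp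
    moreover have "act2 G s p0 = ?q"
      using a act2_cmp[OF a(1) g1 p0] by simp
    ultimately show "s \<in> {g \<in> isotropy G y. act2 G g p0 = ?q}" by simp
  qed
qed

lemma fiber_sum: assumes y: "y \<in> obj G" and p0: "p0 \<in> PP y"
  shows "(\<Sum>p\<in>{p. p \<in> PP y \<and> Psi G H K p = Psi G H K p0}. card {g \<in> isotropy G y. act2 G g p = p})
         = card (isotropy G y)"
proof -
  let ?Gy = "isotropy G y"
  let ?F = "{p. p \<in> PP y \<and> Psi G H K p = Psi G H K p0}"
  let ?o = "\<lambda>g. act2 G g p0"
  have F: "?F = ?o ` ?Gy"
  proof
    show "?F \<subseteq> ?o ` ?Gy"
    proof
      fix p assume "p \<in> ?F"
      then have "p \<in> PP y" "Psi G H K p0 = Psi G H K p" by auto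
      then obtain g where "g \<in> ?Gy" "act2 G g p0 = p" using Psi_orbit[OF y p0] by blast
      then show "p \<in> ?o ` ?Gy" by blast
    qed
  next
    show "?o ` ?Gy \<subseteq> ?F"
    proof
      fix p assume "p \<in> ?o ` ?Gy"
      then obtain g where g: "g \<in> ?Gy" "p = act2 G g p0" by blast
      have pP: "p \<in> PP y" using act2_PP[OF g(1) p0] g(2) by simp
      have "Psi G H K p0 = Psi G H K p" using Psi_orbit[OF y p0 pP] g by blast
      then show "p \<in> ?F" using pP by simp
    qed
  qed
  have "card ?Gy = (\<Sum>g\<in>?Gy. (1::nat))" by simp
  also have "\<dots> = (\<Sum>q\<in>?o ` ?Gy. \<Sum>g\<in>{g. g \<in> ?Gy \<and> ?o g = q}. 1)"
    by (rule sum.image_gen[OF iso_fin])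
  also have "\<dots> = (\<Sum>q\<in>?F. card {g \<in> ?Gy. act2 G g q = q})"
    unfolding F[symmetric]
  proof (rule sum.cong[OF refl])
    fix q assume "q \<in> ?F"
    then have "q \<in> ?o ` ?Gy" using F by simp
    then obtain g1 where g1: "g1 \<in> ?Gy" "q = act2 G g1 p0" by blast
    have "(\<Sum>g\<in>{g. g \<in> ?Gy \<and> ?o g = q}. (1::nat)) = card {g \<in> ?Gy. act2 G g p0 = q}" by simp
    also have "\<dots> = card {g \<in> ?Gy. act2 G g q = q}" using stab_card[OF y p0 g1(1)] g1(2) by simp
    finally show "(\<Sum>g\<in>{g. g \<in> ?Gy \<and> ?o g = q}. 1) = card {g \<in> ?Gy. act2 G g q = q}" .
  qed
  finally show ?thesis by simp
qed

lemma count: assumes y: "y \<in> obj G"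
  shows "(\<Sum>g\<in>isotropy G y. card {C \<in> Xs G H y. act G g C = C} * card {D \<in> Xs G K y. act G g D = D})
     = card (isotropy G y) * card (double_cosets G H K)"
proof -
  let ?Gy = "isotropy G y" and ?P = "PP y"
  let ?S = "\<lambda>p. card {g \<in> ?Gy. act2 G g p = p}"
  have "(\<Sum>g\<in>?Gy. card {C \<in> Xs G H y. act G g C = C} * card {D \<in> Xs G K y. act G g D = D})
      = (\<Sum>g\<in>?Gy. card {p \<in> ?P. act2 G g p = p})"
  proof (rule sum.cong[OF refl])
    fix g
    have "{p \<in> ?P. act2 G g p = p} = {C \<in> Xs G H y. act G g C = C} \<times> {D \<in> Xs G K y. act G g D = D}"
      unfolding act2_def by auto
    then show "card {C \<in> Xs G H y. act G g C = C} * card {D \<in> Xs G K y. act G g D = D} = card {p \<in> ?P. act2 G g p = p}"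
      by (simp add: card_cartesian_product)
  qed
  also have "\<dots> = (\<Sum>g\<in>?Gy. \<Sum>p\<in>?P. if act2 G g p = p then 1 else 0)"
    using PP_fin[of y] by (simp add: card_filter_sum)
  also have "\<dots> = (\<Sum>p\<in>?P. \<Sum>g\<in>?Gy. if act2 G g p = p then 1 else 0)"
    by (rule sum.swap)
  also have "\<dots> = (\<Sum>p\<in>?P. ?S p)"
    using iso_fin[of y] by (simp add: card_filter_sum)
  also have "\<dots> = (\<Sum>d\<in>Psi G H K ` ?P. \<Sum>p\<in>{p. p \<in> ?P \<and> Psi G H K p = d}. ?S p)"
    by (rule sum.image_gen[OF PP_fin])
  also have "\<dots> = (\<Sum>d\<in>Psi G H K ` ?P. card ?Gy)"
  proof (rule sum.cong[OF refl])
    fix d assume "d \<in> Psi G H K ` ?P"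
    then obtain p0 where p0: "p0 \<in> ?P" "d = Psi G H K p0" by blast
    show "(\<Sum>p\<in>{p. p \<in> ?P \<and> Psi G H K p = d}. ?S p) = card ?Gy"
      using fiber_sum[OF y p0(1)] p0(2) by simp
  qed
  also have "Psi G H K ` ?P = double_cosets G H K"
  proof
    show "Psi G H K ` ?P \<subseteq> double_cosets G H K" using Psi_dc by blast
    show "double_cosets G H K \<subseteq> Psi G H K ` ?P" using Psi_surj[OF y] by blast
  qed
  finally show ?thesis by simp
qed

end

theorem corollary5p5:
  fixes G H K :: "('o, 'm) gpd"
    and dI dJ :: "'o \<Rightarrow> nat" and I J :: "'m \<Rightarrow> complex mat" and \<eta> \<theta> :: "'o \<Rightarrow> complex mat"
  assumes "groupoid G"
    and "wide_subgroupoid G H" and "connected_gpd H"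
    and "wide_subgroupoid G K" and "connected_gpd K"
    and "is_induction G H triv_dim triv_rep dI I \<eta>"
    and "is_induction G K triv_dim triv_rep dJ J \<theta>"
  shows "of_nat (card (double_cosets G H K)) =
           char_inner G (character G dI I) (character G dJ J)"
proof -
  interpret two G H K
    by (rule two.intro[OF gpdl.intro[OF assms(1)]]) (simp add: two_axioms_def assms)
  have repI: "is_rep G dI I" using assms(6) unfolding is_induction_def by blast
  have repJ: "is_rep G dJ J" using assms(7) unfolding is_induction_def by blast
  let ?D = "card (double_cosets G H K)"
  have chI: "character G dI I g = of_nat (card {C \<in> Xs G H y. act G g C = C})"
    if g: "g \<in> isotropy G y" for g y
  proof -
    have gG: "g \<in> mor G" "gdom G g = y" "gcod G g = y" using g unfolding iso_iff by auto
    show ?thesis using character_mtr[OF repI gG] Hs.char_eq[OF assms(6) gG] Hs.mtr_Mm[OF gG] by simp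
  qed
  have chJ: "character G dJ J g = of_nat (card {C \<in> Xs G K y. act G g C = C})"
    if g: "g \<in> isotropy G y" for g y
  proof -
    have gG: "g \<in> mor G" "gdom G g = y" "gcod G g = y" using g unfolding iso_iff by auto
    show ?thesis using character_mtr[OF repJ gG] Ks.char_eq[OF assms(7) gG] Ks.mtr_Mm[OF gG] by simp
  qed
  have inner: "(1 / of_nat (card (isotropy G y))) *
        (\<Sum>g\<in>isotropy G y. character G dI I g * cnj (character G dJ J g)) = (of_nat ?D :: complex)"
    if y: "y \<in> obj G" for y
  proof -
    have ne: "card (isotropy G y) \<noteq> 0" using iso_id[OF y] iso_fin[of y] by (metis card_0_eq empty_iff)
    have "(\<Sum>g\<in>isotropy G y. character G dI I g * cnj (character G dJ J g))
        = (\<Sum>g\<in>isotropy G y. of_nat (card {C \<in> Xs G H y. act G g C = C} * card {D \<in> Xs G K y. act G g D = D}))"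
      by (rule sum.cong[OF refl]) (simp add: chI chJ)
    also have "\<dots> = of_nat (card (isotropy G y) * ?D)"
      unfolding of_nat_sum[symmetric] count[OF y] by simp
    finally show ?thesis using ne by simp
  qed
  have n: "card (obj G) \<noteq> 0" using fin_obj obj_ne by simp
  have "char_inner G (character G dI I) (character G dJ J) = (1 / of_nat (card (obj G))) * (\<Sum>y\<in>obj G. of_nat ?D)"
    unfolding char_inner_def using inner by simp
  also have "\<dots> = of_nat ?D" using n by simp
  finally show ?thesis by simp
qed

end
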